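(* For every rooted tree $T$, \[\mathcal{P}(T;x,y)=L(T;x,y):=\sum_{A\in\mathcal{A}(T)}x^{\ell(A)}y^{s(A)}.\]
   Context: For a rooted tree $T$ with root $r$, the branches $T_1,\dots,T_k$ are the subtrees obtained by deleting $r$, each rooted at the neighbour of $r$ it contains; $|T|$ is the number of vertices. The polynomial $\mathcal{P}(T;x,y)$ is defined recursively by $\mathcal{P}(T;x,y)=x$ if $T$ has a single vertex, and otherwise $\mathcal{P}(T;x,y)=\prod_{i=1}^k\mathcal{P}(T_i;x,y)+y^{|T|-1}$. An antichain in $T$ is a set of vertices no two of which lie on a common path starting at the root (i.e. no one is an ancestor of another); a maximal antichain is an antichain not properly contained in another antichain; $\mathcal{A}(T)$ is the set of maximal antichains of $T$. A leaf is a vertex with no children (so the root of a one-vertex tree is a leaf). For $A\in\mathcal{A}(T)$, $\ell(A)$ is the number of leaves in $A$, and $s(A)=\sum_{a\in A}(|T_a|-1)$, where $T_a$ is the subtree consisting of $a$ and all its descendants. *)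

theory Defs
  imports Main "HOL-Library.Sublist"
begin

text \<open>Rooted trees as rose trees: a node together with the list of its branches.
  Vertices are addressed by positions (paths of child indices from the root).\<close>

datatype rtree = Node "rtree list"

fun children :: "rtree \<Rightarrow> rtree list" where
  "children (Node ts) = ts"

fun tsize :: "rtree \<Rightarrow> nat" where
  "tsize (Node ts) = Suc (sum_list (map tsize ts))"

fun Ppoly :: "rtree \<Rightarrow> 'a::comm_ring_1 \<Rightarrow> 'a \<Rightarrow> 'a" where
  "Ppoly (Node ts) x y =
     (if ts = [] then x
      else prod_list (map (\<lambda>t. Ppoly t x y) ts) + y ^ (tsize (Node ts) - 1))"

fun valid_pos :: "rtree \<Rightarrow> nat list \<Rightarrow> bool" where
  "valid_pos t [] = True"
| "valid_pos (Node ts) (i # p) = (i < length ts \<and> valid_pos (ts ! i) p)"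

definition positions :: "rtree \<Rightarrow> nat list set" where
  "positions t = {p. valid_pos t p}"

fun subtree_at :: "rtree \<Rightarrow> nat list \<Rightarrow> rtree" where
  "subtree_at t [] = t"
| "subtree_at (Node ts) (i # p) = (if i < length ts then subtree_at (ts ! i) p else Node [])"

definition is_leaf :: "rtree \<Rightarrow> nat list \<Rightarrow> bool" where
  "is_leaf t a \<longleftrightarrow> children (subtree_at t a) = []"

text \<open>A vertex a is an ancestor-or-equal of b iff the position of a is a prefix of that of b.\<close>
definition antichain :: "rtree \<Rightarrow> nat list set \<Rightarrow> bool" where
  "antichain t A \<longleftrightarrow> A \<subseteq> positions t \<and>
     (\<forall>a\<in>A. \<forall>b\<in>A. a \<noteq> b \<longrightarrow> \<not> prefix a b)"

definition max_antichains :: "rtree \<Rightarrow> nat list set set" where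
  "max_antichains t = {A. antichain t A \<and> \<not> (\<exists>B. antichain t B \<and> A \<subset> B)}"

definition leafcount :: "rtree \<Rightarrow> nat list set \<Rightarrow> nat" where
  "leafcount t A = card {a\<in>A. is_leaf t a}"

definition sval :: "rtree \<Rightarrow> nat list set \<Rightarrow> nat" where
  "sval t A = (\<Sum>a\<in>A. tsize (subtree_at t a) - 1)"

definition Lpoly :: "rtree \<Rightarrow> 'a::comm_ring_1 \<Rightarrow> 'a \<Rightarrow> 'a" where
  "Lpoly t x y = (\<Sum>A\<in>max_antichains t. x ^ leafcount t A * y ^ sval t A)"

end

theory Submission
  imports Defs "HOL-Library.FuncSet"
begin

lemma positions_Node:
  "positions (Node ts) = insert [] (\<Union>i<length ts. (#) i ` positions (ts!i))"
  unfolding positions_def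
  apply (rule set_eqI)
  subgoal for p by (cases p) auto
  done

lemma finite_positions: "finite (positions t)"
proof (induction t)
  case (Node ts)
  show ?case unfolding positions_Node
    using Node by (auto intro!: finite_UN_I)
qed

lemma pos_Nil[simp]: "[] \<in> positions t"
  by (simp add: positions_def)

lemma pos_Cons_Node[simp]: "(i # p \<in> positions (Node ts)) = (i < length ts \<and> p \<in> positions (ts!i))"
  by (simp add: positions_def)

lemma max_antichains_char:
  "max_antichains t = {A. antichain t A \<and> (\<forall>p\<in>positions t. \<exists>a\<in>A. prefix a p \<or> prefix p a)}"
proof (intro set_eqI iffI CollectI conjI)
  fix A assume "A \<in> max_antichains t"
  hence ac: "antichain t A" and nb: "\<not> (\<exists>B. antichain t B \<and> A \<subset> B)"
    unfolding max_antichains_def by auto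
  show "antichain t A" by (rule ac)
  show "\<forall>p\<in>positions t. \<exists>a\<in>A. prefix a p \<or> prefix p a"
  proof (intro ballI, rule ccontr)
    fix p assume p: "p \<in> positions t" and np: "\<not> (\<exists>a\<in>A. prefix a p \<or> prefix p a)"
    have "p \<notin> A" using np by auto
    have "antichain t (insert p A)" using ac p np unfolding antichain_def by auto
    moreover have "A \<subset> insert p A" using \<open>p \<notin> A\<close> by auto
    ultimately show False using nb by blast
  qed
next
  fix A assume "A \<in> {A. antichain t A \<and> (\<forall>p\<in>positions t. \<exists>a\<in>A. prefix a p \<or> prefix p a)}"
  hence ac: "antichain t A" and cov: "\<forall>p\<in>positions t. \<exists>a\<in>A. prefix a p \<or> prefix p a" by auto
  have "\<not> (antichain t B \<and> A \<subset> B)" for B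
  proof
    assume h: "antichain t B \<and> A \<subset> B"
    then obtain b where b: "b \<in> B" "b \<notin> A" by blast
    hence "b \<in> positions t" using h unfolding antichain_def by blast
    then obtain a where a: "a \<in> A" "prefix a b \<or> prefix b a" using cov by blast
    have aB: "a \<in> B" and ab: "a \<noteq> b" using a h b by blast+
    have hB: "\<forall>x\<in>B. \<forall>y\<in>B. x \<noteq> y \<longrightarrow> \<not> prefix x y" using h unfolding antichain_def by simp
    have "\<not> prefix a b" using hB[rule_format, OF aB b(1) ab] .
    moreover have "\<not> prefix b a" using hB[rule_format, OF b(1) aB] ab by simp
    ultimately show False using a(2) by blast
  qed
  thus "A \<in> max_antichains t" using ac unfolding max_antichains_def by auto
qed

definition U :: "nat \<Rightarrow> (nat \<Rightarrow> nat list set) \<Rightarrow> nat list set" where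
  "U n F = (\<Union>i<n. (#) i ` F i)"

definition proj :: "nat \<Rightarrow> nat list set \<Rightarrow> nat list set" where
  "proj i A = {p. i # p \<in> A}"

lemma root_max: "{[]} \<in> max_antichains t"
  unfolding max_antichains_char antichain_def by simp

lemma root_in_max:
  assumes A: "A \<in> max_antichains t" and r: "[] \<in> A" shows "A = {[]}"
proof -
  have hB: "\<forall>x\<in>A. \<forall>y\<in>A. x \<noteq> y \<longrightarrow> \<not> prefix x y"
    using A unfolding max_antichains_char antichain_def by simp
  have "x = []" if "x \<in> A" for x
  proof (rule ccontr)
    assume "x \<noteq> []"
    hence "\<not> prefix [] x" using hB[rule_format, OF r that] by simp
    thus False by simp
  qed
  thus ?thesis using r by auto
qed

lemma max_nonempty: assumes "A \<in> max_antichains t" shows "A \<noteq> {}"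
proof -
  have "\<forall>p\<in>positions t. \<exists>a\<in>A. prefix a p \<or> prefix p a"
    using assms unfolding max_antichains_char by simp
  hence "\<exists>a\<in>A. prefix a [] \<or> prefix [] a" by (rule bspec) (rule pos_Nil)
  thus ?thesis by auto
qed

lemma max_facts:
  assumes "A \<in> max_antichains t"
  shows "A \<subseteq> positions t" "\<And>x y. x \<in> A \<Longrightarrow> y \<in> A \<Longrightarrow> x \<noteq> y \<Longrightarrow> \<not> prefix x y"
    "\<And>p. p \<in> positions t \<Longrightarrow> \<exists>a\<in>A. prefix a p \<or> prefix p a"
  using assms unfolding max_antichains_char antichain_def by simp_all

lemma max_intro:
  assumes "A \<subseteq> positions t" "\<And>x y. x \<in> A \<Longrightarrow> y \<in> A \<Longrightarrow> x \<noteq> y \<Longrightarrow> \<not> prefix x y"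
    "\<And>p. p \<in> positions t \<Longrightarrow> \<exists>a\<in>A. prefix a p \<or> prefix p a"
  shows "A \<in> max_antichains t"
  using assms unfolding max_antichains_char antichain_def by simp

lemma U_mem: "x \<in> U n F \<longleftrightarrow> (\<exists>i p. x = i # p \<and> i < n \<and> p \<in> F i)"
  unfolding U_def by auto

lemma union_max:
  assumes F: "F \<in> PiE {..<length ts} (\<lambda>i. max_antichains (ts!i))" and ne: "ts \<noteq> []"
  shows "U (length ts) F \<in> max_antichains (Node ts)"
proof (rule max_intro)
  have Fi: "\<And>i. i < length ts \<Longrightarrow> F i \<in> max_antichains (ts!i)"
    using F by (simp add: PiE_iff)
  show "U (length ts) F \<subseteq> positions (Node ts)"
  proof
    fix x assume "x \<in> U (length ts) F"
    then obtain i p where x: "x = i # p" "i < length ts" "p \<in> F i" unfolding U_mem by blast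
    have "p \<in> positions (ts!i)" using max_facts(1)[OF Fi[OF x(2)]] x(3) by (rule subsetD)
    thus "x \<in> positions (Node ts)" using x by simp
  qed
  fix a b assume a: "a \<in> U (length ts) F" and b: "b \<in> U (length ts) F" and ab: "a \<noteq> b"
  then obtain i p where ia: "a = i # p" "i < length ts" "p \<in> F i" unfolding U_mem by blast
  obtain j q where jb: "b = j # q" "j < length ts" "q \<in> F j" using b unfolding U_mem by blast
  show "\<not> prefix a b"
  proof
    assume "prefix a b"
    hence "i = j" "prefix p q" using ia jb by simp_all
    moreover have "p \<noteq> q" using ab ia jb \<open>i = j\<close> by simp
    ultimately show False using max_facts(2)[OF Fi[OF ia(2)] ia(3)] jb(3) by simp
  qed
next
  have Fi: "\<And>i. i < length ts \<Longrightarrow> F i \<in> max_antichains (ts!i)"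
    using F by (simp add: PiE_iff)
  fix p assume p: "p \<in> positions (Node ts)"
  show "\<exists>a\<in>U (length ts) F. prefix a p \<or> prefix p a"
  proof (cases p)
    case Nil
    have l: "0 < length ts" using ne by simp
    have "F 0 \<noteq> {}" using max_nonempty[OF Fi[OF l]] .
    then obtain a where "a \<in> F 0" by blast
    hence "0 # a \<in> U (length ts) F" using l unfolding U_mem by blast
    thus ?thesis using Nil by (intro bexI[of _ "0 # a"]) simp_all
  next
    case (Cons i q)
    hence iq: "i < length ts" "q \<in> positions (ts!i)" using p by simp_all
    obtain a where a: "a \<in> F i" "prefix a q \<or> prefix q a" using max_facts(3)[OF Fi[OF iq(1)] iq(2)] by blast
    have "i # a \<in> U (length ts) F" using iq a unfolding U_mem by blast
    thus ?thesis using Cons a(2) by (intro bexI[of _ "i # a"]) simp_all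
  qed
qed

lemma decomp:
  assumes A: "A \<in> max_antichains (Node ts)" and r: "[] \<notin> A"
  shows "(\<lambda>i\<in>{..<length ts}. proj i A) \<in> PiE {..<length ts} (\<lambda>i. max_antichains (ts!i))"
    and "A = U (length ts) (\<lambda>i\<in>{..<length ts}. proj i A)"
proof -
  note f = max_facts[OF A]
  have "proj i A \<in> max_antichains (ts!i)" if i: "i < length ts" for i
  proof (rule max_intro)
    show "proj i A \<subseteq> positions (ts!i)"
    proof
      fix p assume "p \<in> proj i A"
      hence "i # p \<in> positions (Node ts)" using f(1) unfolding proj_def by auto
      thus "p \<in> positions (ts!i)" by simp
    qed
  next
    fix a b assume "a \<in> proj i A" "b \<in> proj i A" "a \<noteq> b"
    hence "i # a \<in> A" "i # b \<in> A" "i # a \<noteq> i # b" unfolding proj_def by simp_all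
    hence "\<not> prefix (i # a) (i # b)" by (rule f(2))
    thus "\<not> prefix a b" by simp
  next
    fix q assume q: "q \<in> positions (ts!i)"
    hence "i # q \<in> positions (Node ts)" using i by simp
    then obtain a where a: "a \<in> A" "prefix a (i#q) \<or> prefix (i#q) a" using f(3) by blast
    then obtain r' where ar: "a = i # r'" using r by (cases a) auto
    hence "r' \<in> proj i A" using a(1) unfolding proj_def by simp
    moreover have "prefix r' q \<or> prefix q r'" using a(2) ar by simp
    ultimately show "\<exists>a\<in>proj i A. prefix a q \<or> prefix q a" by (rule bexI[rotated])
  qed
  thus "(\<lambda>i\<in>{..<length ts}. proj i A) \<in> PiE {..<length ts} (\<lambda>i. max_antichains (ts!i))"
    by (simp add: restrict_PiE_iff)
  show "A = U (length ts) (\<lambda>i\<in>{..<length ts}. proj i A)"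
  proof (intro set_eqI iffI)
    fix a assume a: "a \<in> A"
    then obtain i r' where ar: "a = i # r'" using r by (cases a) auto
    have "a \<in> positions (Node ts)" using f(1) a by (rule subsetD)
    hence "i < length ts" using ar by simp
    thus "a \<in> U (length ts) (\<lambda>i\<in>{..<length ts}. proj i A)"
      using a ar unfolding U_mem proj_def by simp
  next
    fix a assume "a \<in> U (length ts) (\<lambda>i\<in>{..<length ts}. proj i A)"
    thus "a \<in> A" unfolding U_mem proj_def by auto
  qed
qed

lemma finite_max: "finite (max_antichains t)"
proof -
  have "max_antichains t \<subseteq> Pow (positions t)"
    unfolding max_antichains_def antichain_def by auto
  thus ?thesis using finite_positions[of t] by (meson finite_Pow_iff finite_subset)
qed

lemma finite_mem_max: "A \<in> max_antichains t \<Longrightarrow> finite A"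
  using max_facts(1) finite_positions finite_subset by blast

lemma proj_U: "i < n \<Longrightarrow> proj i (U n F) = F i"
  unfolding proj_def U_mem by auto

lemma U_Nil: "[] \<notin> U n F"
  unfolding U_mem by simp

lemma inj_U: "inj_on (U n) (PiE {..<n} M)"
proof (rule inj_onI)
  fix F G assume F: "F \<in> PiE {..<n} M" and G: "G \<in> PiE {..<n} M" and e: "U n F = U n G"
  show "F = G"
  proof (rule PiE_ext[OF F G])
    fix i assume "i \<in> {..<n}"
    hence "i < n" by simp
    thus "F i = G i" using proj_U[of i n F] proj_U[of i n G] e by simp
  qed
qed

lemma max_Node:
  assumes ne: "ts \<noteq> []"
  shows "max_antichains (Node ts) =
    insert {[]} (U (length ts) ` PiE {..<length ts} (\<lambda>i. max_antichains (ts!i)))"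
proof (intro set_eqI iffI)
  fix A assume A: "A \<in> max_antichains (Node ts)"
  show "A \<in> insert {[]} (U (length ts) ` PiE {..<length ts} (\<lambda>i. max_antichains (ts!i)))"
  proof (cases "[] \<in> A")
    case True thus ?thesis using root_in_max[OF A] by simp
  next
    case False
    show ?thesis using decomp[OF A False] by blast
  qed
next
  fix A assume "A \<in> insert {[]} (U (length ts) ` PiE {..<length ts} (\<lambda>i. max_antichains (ts!i)))"
  thus "A \<in> max_antichains (Node ts)" using root_max union_max[OF _ ne] by blast
qed

lemma sum_U:
  assumes "\<And>i. i < n \<Longrightarrow> finite (F i)"
  shows "sum g (U n F) = (\<Sum>i<n. \<Sum>p\<in>F i. g (i # p))"
proof -
  have "sum g (U n F) = (\<Sum>i<n. sum g ((#) i ` F i))"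
    unfolding U_def
    by (rule sum.UNION_disjoint) (use assms in auto)
  also have "\<dots> = (\<Sum>i<n. \<Sum>p\<in>F i. g (i # p))"
    by (rule sum.cong) (simp_all add: sum.reindex)
  finally show ?thesis .
qed

lemma card_filter_sum: "finite A \<Longrightarrow> card {a\<in>A. P a} = (\<Sum>a\<in>A. if P a then 1 else 0)"
  by (simp add: sum.inter_filter[symmetric])

lemma leafcount_eq: "finite A \<Longrightarrow> leafcount t A = (\<Sum>a\<in>A. if is_leaf t a then 1 else 0)"
  unfolding leafcount_def by (rule card_filter_sum)

lemma is_leaf_Cons: "i < length ts \<Longrightarrow> is_leaf (Node ts) (i # p) = is_leaf (ts!i) p"
  unfolding is_leaf_def by simp

lemma term_U:
  fixes x y :: "'a::comm_ring_1"
  assumes F: "F \<in> PiE {..<length ts} (\<lambda>i. max_antichains (ts!i))"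
  shows "x ^ leafcount (Node ts) (U (length ts) F) * y ^ sval (Node ts) (U (length ts) F)
    = (\<Prod>i<length ts. x ^ leafcount (ts!i) (F i) * y ^ sval (ts!i) (F i))"
proof -
  have fin: "\<And>i. i < length ts \<Longrightarrow> finite (F i)"
    using F finite_mem_max by (auto simp: PiE_iff)
  have finU: "finite (U (length ts) F)" unfolding U_def using fin by auto
  have l: "leafcount (Node ts) (U (length ts) F) = (\<Sum>i<length ts. leafcount (ts!i) (F i))"
    unfolding leafcount_eq[OF finU]
  proof -
    have "(\<Sum>a\<in>U (length ts) F. if is_leaf (Node ts) a then 1 else 0) =
      (\<Sum>i<length ts. \<Sum>p\<in>F i. if is_leaf (Node ts) (i # p) then 1 else 0)"
      by (rule sum_U[OF fin])
    also have "\<dots> = (\<Sum>i<length ts. leafcount (ts!i) (F i))"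
      by (rule sum.cong) (simp_all add: leafcount_eq fin is_leaf_Cons)
    finally show "(\<Sum>a\<in>U (length ts) F. if is_leaf (Node ts) a then 1 else 0) =
      (\<Sum>i<length ts. leafcount (ts!i) (F i))" .
  qed
  have s: "sval (Node ts) (U (length ts) F) = (\<Sum>i<length ts. sval (ts!i) (F i))"
    unfolding sval_def
  proof -
    have "(\<Sum>a\<in>U (length ts) F. tsize (subtree_at (Node ts) a) - 1) =
      (\<Sum>i<length ts. \<Sum>p\<in>F i. tsize (subtree_at (Node ts) (i # p)) - 1)"
      by (rule sum_U[OF fin])
    also have "\<dots> = (\<Sum>i<length ts. \<Sum>p\<in>F i. tsize (subtree_at (ts!i) p) - 1)"
      by (rule sum.cong) simp_all
    finally show "(\<Sum>a\<in>U (length ts) F. tsize (subtree_at (Node ts) a) - 1) =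
      (\<Sum>i<length ts. \<Sum>p\<in>F i. tsize (subtree_at (ts!i) p) - 1)" .
  qed
  show ?thesis unfolding l s power_sum prod.distrib ..
qed

theorem theorem2p9:
  fixes T :: rtree and x y :: "'a::comm_ring_1"
  shows "Ppoly T x y = Lpoly T x y"
proof (induction T)
  case (Node ts)
  show ?case
  proof (cases "ts = []")
    case True
    have pos: "positions (Node ts) = {[]}" using True unfolding positions_Node by simp
    have "max_antichains (Node ts) = {{[]}}"
    proof (intro set_eqI iffI)
      fix A assume A: "A \<in> max_antichains (Node ts)"
      have "A \<subseteq> {[]}" using max_facts(1)[OF A] pos by simp
      moreover have "A \<noteq> {}" using max_nonempty[OF A] .
      ultimately show "A \<in> {{[]}}" by blast
    qed (use root_max in simp)
    moreover have "leafcount (Node ts) {[]} = 1"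
    proof -
      have "{a\<in>{[]}. is_leaf (Node ts) a} = {[]}" using True by (auto simp: is_leaf_def)
      thus ?thesis unfolding leafcount_def by simp
    qed
    moreover have "sval (Node ts) {[]} = 0" using True unfolding sval_def by simp
    ultimately show ?thesis using True unfolding Lpoly_def by simp
  next
    case False
    let ?n = "length ts" and ?M = "\<lambda>i. max_antichains (ts!i)"
    let ?f = "\<lambda>t A. x ^ leafcount t A * y ^ sval t A"
    have nin: "{[]} \<notin> U ?n ` PiE {..<?n} ?M" using U_Nil by auto
    have finP: "finite (PiE {..<?n} ?M)" by (rule finite_PiE) (simp_all add: finite_max)
    have e: "{a\<in>{[]}. is_leaf (Node ts) a} = {}" using False by (auto simp: is_leaf_def)
    have r: "?f (Node ts) {[]} = y ^ (tsize (Node ts) - 1)"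
      unfolding leafcount_def sval_def e by simp
    have "Lpoly (Node ts) x y = ?f (Node ts) {[]} + (\<Sum>A\<in>U ?n ` PiE {..<?n} ?M. ?f (Node ts) A)"
      unfolding Lpoly_def max_Node[OF False]
      by (rule sum.insert) (use nin finP in auto)
    also have "(\<Sum>A\<in>U ?n ` PiE {..<?n} ?M. ?f (Node ts) A) = (\<Sum>F\<in>PiE {..<?n} ?M. ?f (Node ts) (U ?n F))"
      by (rule sum.reindex[OF inj_U, unfolded comp_def])
    also have "\<dots> = (\<Sum>F\<in>PiE {..<?n} ?M. \<Prod>i<?n. ?f (ts!i) (F i))"
      by (rule sum.cong) (simp_all add: term_U)
    also have "\<dots> = (\<Prod>i<?n. \<Sum>A\<in>?M i. ?f (ts!i) A)"
      by (rule prod_sum_PiE[symmetric]) (simp_all add: finite_max)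
    also have "\<dots> = (\<Prod>i<?n. Ppoly (ts!i) x y)"
      by (rule prod.cong) (simp_all add: Lpoly_def Node)
    also have "\<dots> = prod_list (map (\<lambda>t. Ppoly t x y) ts)"
      by (simp add: prod.list_conv_set_nth atLeast0LessThan)
    finally show ?thesis using False r by simp
  qed
qed

end
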